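(* Let $K$ be a field and $P$ an arbitrary poset. Let $\alpha\in FI(P)$ be an idempotent ($\alpha^2=\alpha$), and let $\varepsilon\in FI(P)$ be the diagonal element with $\varepsilon(x,x)=\alpha(x,x)$ for all $x\in P$. Then $\varepsilon$ is an idempotent and there is an invertible $\beta\in FI(P)$ with $\alpha=\beta^{-1}\varepsilon\beta$.
   Context: $K$ is a field, $P$ an arbitrary poset. $I(P)$ is the set of functions $\alpha$ assigning to each pair $x\le y$ in $P$ a value $\alpha(x,y)\in K$. An element $\alpha\in I(P)$ is a finitary series if for all $x<y$ in $P$ there are only finitely many pairs $(u,v)$ with $x\le u<v\le y$ and $\alpha(u,v)\neq0$; $FI(P)$ is the set of finitary series. $FI(P)$ is an associative $K$-algebra under pointwise addition and convolution $(\alpha\beta)(x,y)=\sum_{x\le z\le y}\alpha(x,z)\beta(z,y)$, with identity $\delta$ given by $\delta(x,y)=1$ if $x=y$ and $0$ otherwise. An element $\alpha\in FI(P)$ is diagonal if $\alpha(x,y)=0$ whenever $x\neq y$. *)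

theory Defs
  imports Main
begin

text \<open>An element of I(P) is represented by a function alpha :: P => P => K whose values
 at pairs (x,y) with not x <= y are fixed to 0 (they are not part of the series).\<close>

definition FI :: "('a::order \<Rightarrow> 'a \<Rightarrow> 'k::field) set" where
  "FI = {f. (\<forall>x y. \<not> x \<le> y \<longrightarrow> f x y = 0) \<and>
            (\<forall>x y. x < y \<longrightarrow> finite {(u, v). x \<le> u \<and> u < v \<and> v \<le> y \<and> f u v \<noteq> 0})}"

text \<open>Convolution: the sum over the interval [x,y], written as a sum over the
 (finite, for finitary series) set of indices with nonzero summand.\<close>

definition conv :: "('a::order \<Rightarrow> 'a \<Rightarrow> 'k::field) \<Rightarrow> ('a \<Rightarrow> 'a \<Rightarrow> 'k) \<Rightarrow> 'a \<Rightarrow> 'a \<Rightarrow> 'k" where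
  "conv f g x y = (if x \<le> y then
      (\<Sum>z \<in> {z. x \<le> z \<and> z \<le> y \<and> f x z * g z y \<noteq> 0}. f x z * g z y) else 0)"

definition delta :: "'a::order \<Rightarrow> 'a \<Rightarrow> 'k::field" where
  "delta x y = (if x = y then 1 else 0)"

definition diag_part :: "('a::order \<Rightarrow> 'a \<Rightarrow> 'k::field) \<Rightarrow> 'a \<Rightarrow> 'a \<Rightarrow> 'k" where
  "diag_part f x y = (if x = y then f x x else 0)"

end

theory Submission
  imports Defs
begin

definition supp :: "('a::order \<Rightarrow> 'a \<Rightarrow> 'k::field) \<Rightarrow> 'a \<Rightarrow> 'a \<Rightarrow> ('a \<times> 'a) set" where
  "supp f x y = {(u, v). x \<le> u \<and> u < v \<and> v \<le> y \<and> f u v \<noteq> 0}"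

definition pts :: "('a::order \<Rightarrow> 'a \<Rightarrow> 'k::field) \<Rightarrow> 'a \<Rightarrow> 'a \<Rightarrow> 'a set" where
  "pts f x y = insert x (insert y (fst ` supp f x y \<union> snd ` supp f x y))"

lemma FI_zero: "f \<in> FI \<Longrightarrow> \<not> x \<le> y \<Longrightarrow> f x y = 0"
  unfolding FI_def by blast

lemma finite_supp: assumes "f \<in> FI" shows "finite (supp f x y)"
proof (cases "x < y")
  case True thus ?thesis using assms unfolding FI_def supp_def by blast
next
  case False
  hence "supp f x y = {}" unfolding supp_def using le_less_trans less_le_trans by blast
  thus ?thesis by simp
qed

lemma finite_pts: "f \<in> FI \<Longrightarrow> finite (pts f x y)"
  unfolding pts_def using finite_supp by blast

lemma FI_intro:
  assumes "\<And>x y. \<not> x \<le> y \<Longrightarrow> f x y = 0" and "\<And>x y. x < y \<Longrightarrow> finite (supp f x y)"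
  shows "f \<in> FI"
  using assms unfolding FI_def supp_def by blast

lemma supp_mono: "x \<le> x' \<Longrightarrow> y' \<le> y \<Longrightarrow> supp f x' y' \<subseteq> supp f x y"
  unfolding supp_def by (auto intro: order_trans)

lemma conv_sum_gen:
  assumes "finite T" and "\<And>w. x \<le> w \<Longrightarrow> w \<le> y \<Longrightarrow> f x w * g w y \<noteq> 0 \<Longrightarrow> w \<in> T"
  shows "conv f g x y = (\<Sum>w\<in>T. if x \<le> w \<and> w \<le> y then f x w * g w y else 0)"
proof (cases "x \<le> y")
  case True
  let ?A = "{w. x \<le> w \<and> w \<le> y \<and> f x w * g w y \<noteq> 0}"
  have sub: "?A \<subseteq> T" using assms(2) by blast
  have "(\<Sum>w\<in>T. if x \<le> w \<and> w \<le> y then f x w * g w y else 0)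
      = (\<Sum>w\<in>?A. if x \<le> w \<and> w \<le> y then f x w * g w y else 0)"
    by (rule sum.mono_neutral_right[OF assms(1) sub]) auto
  also have "\<dots> = (\<Sum>w\<in>?A. f x w * g w y)" by (rule sum.cong) auto
  finally show ?thesis using True unfolding conv_def by simp
next
  case False
  have "\<not>(x \<le> w \<and> w \<le> y)" for w using False order_trans by blast
  hence "\<forall>w\<in>T. (if x \<le> w \<and> w \<le> y then f x w * g w y else 0) = 0" by auto
  hence "(\<Sum>w\<in>T. if x \<le> w \<and> w \<le> y then f x w * g w y else 0) = 0" by (rule sum.neutral)
  thus ?thesis using False unfolding conv_def by simp
qed

lemma conv_T1:
  assumes "f \<in> FI" "finite T" "pts f x y \<subseteq> T"
  shows "conv f g x y = (\<Sum>w\<in>T. if x \<le> w \<and> w \<le> y then f x w * g w y else 0)"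
proof (rule conv_sum_gen[OF assms(2)])
  fix w assume h: "x \<le> w" "w \<le> y" "f x w * g w y \<noteq> 0"
  show "w \<in> T"
  proof (cases "w = x")
    case True thus ?thesis using assms(3) unfolding pts_def by auto
  next
    case False
    hence "(x, w) \<in> supp f x y" using h unfolding supp_def by auto
    hence "w \<in> pts f x y" unfolding pts_def by force
    thus ?thesis using assms(3) by auto
  qed
qed

lemma conv_T2:
  assumes "g \<in> FI" "finite T" "pts g x y \<subseteq> T"
  shows "conv f g x y = (\<Sum>w\<in>T. if x \<le> w \<and> w \<le> y then f x w * g w y else 0)"
proof (rule conv_sum_gen[OF assms(2)])
  fix w assume h: "x \<le> w" "w \<le> y" "f x w * g w y \<noteq> 0"
  show "w \<in> T"
  proof (cases "w = y")
    case True thus ?thesis using assms(3) unfolding pts_def by auto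
  next
    case False
    hence "(w, y) \<in> supp g x y" using h unfolding supp_def by auto
    hence "w \<in> pts g x y" unfolding pts_def by force
    thus ?thesis using assms(3) by auto
  qed
qed

lemma conv_nonzero:
  assumes "conv f g x y \<noteq> 0"
  shows "\<exists>z. x \<le> z \<and> z \<le> y \<and> f x z \<noteq> 0 \<and> g z y \<noteq> 0"
proof -
  have "x \<le> y" using assms unfolding conv_def by (auto split: if_splits)
  hence "(\<Sum>z \<in> {z. x \<le> z \<and> z \<le> y \<and> f x z * g z y \<noteq> 0}. f x z * g z y) \<noteq> 0"
    using assms unfolding conv_def by simp
  then obtain z where "z \<in> {z. x \<le> z \<and> z \<le> y \<and> f x z * g z y \<noteq> 0}"
    by (metis (no_types, lifting) sum.neutral)
  thus ?thesis by auto
qed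

lemma conv_FI:
  assumes f: "f \<in> FI" and g: "g \<in> FI"
  shows "conv f g \<in> FI"
proof (rule FI_intro)
  fix x y :: 'a
  show "\<not> x \<le> y \<Longrightarrow> conv f g x y = 0" unfolding conv_def by simp
  have "supp (conv f g) x y \<subseteq> (fst ` supp f x y \<union> fst ` supp g x y) \<times> (snd ` supp f x y \<union> snd ` supp g x y)"
  proof
    fix p assume p: "p \<in> supp (conv f g) x y"
    obtain a b where ab: "p = (a, b)" by (cases p)
    have h: "x \<le> a" "a < b" "b \<le> y" "conv f g a b \<noteq> 0" using p ab unfolding supp_def by auto
    obtain z where z: "a \<le> z" "z \<le> b" "f a z \<noteq> 0" "g z b \<noteq> 0" using conv_nonzero[OF h(4)] by blast
    show "p \<in> (fst ` supp f x y \<union> fst ` supp g x y) \<times> (snd ` supp f x y \<union> snd ` supp g x y)"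
    proof (cases "z = a")
      case True
      hence "(a, b) \<in> supp g x y" using h z unfolding supp_def by auto
      thus ?thesis using ab by force
    next
      case False
      hence za: "(a, z) \<in> supp f x y" using h z unfolding supp_def by (auto intro: order_trans)
      show ?thesis
      proof (cases "z = b")
        case True thus ?thesis using za ab by force
      next
        case False
        hence "(z, b) \<in> supp g x y" using h z \<open>z \<noteq> a\<close> unfolding supp_def by (auto intro: order_trans)
        thus ?thesis using za ab by force
      qed
    qed
  qed
  moreover have "finite ((fst ` supp f x y \<union> fst ` supp g x y) \<times> (snd ` supp f x y \<union> snd ` supp g x y))"
    using finite_supp[OF f] finite_supp[OF g] by blast
  ultimately show "finite (supp (conv f g) x y)" by (rule finite_subset)
qed

lemma diff_FI: assumes "f \<in> FI" "g \<in> FI" shows "f - g \<in> FI"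
proof (rule FI_intro)
  fix x y :: 'a
  show "\<not> x \<le> y \<Longrightarrow> (f - g) x y = 0" using FI_zero[OF assms(1), of x y] FI_zero[OF assms(2), of x y] by simp
  have "supp (f - g) x y \<subseteq> supp f x y \<union> supp g x y" unfolding supp_def by auto
  thus "finite (supp (f - g) x y)" by (rule finite_subset[OF _ finite_UnI[OF finite_supp[OF assms(1)] finite_supp[OF assms(2)]]])
qed

lemma delta_FI: "delta \<in> FI"
  by (rule FI_intro) (auto simp: delta_def supp_def)

lemma diag_FI: "diag_part f \<in> FI"
  by (rule FI_intro) (auto simp: diag_part_def supp_def)

lemma conv_diag_left: "conv (diag_part f) g x y = (if x \<le> y then f x x * g x y else 0)"
  by (subst conv_sum_gen[where T="{x}"]) (auto simp: diag_part_def split: if_splits)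

lemma conv_diag_right: "conv g (diag_part f) x y = (if x \<le> y then g x y * f y y else 0)"
  by (subst conv_sum_gen[where T="{y}"]) (auto simp: diag_part_def split: if_splits)

lemma conv_delta_left: "g \<in> FI \<Longrightarrow> conv delta g = g"
  by (rule ext, rule ext, subst conv_sum_gen[where T="{_}"]) (auto simp: delta_def FI_zero split: if_splits)

lemma conv_delta_right: "g \<in> FI \<Longrightarrow> conv g delta = g"
  by (rule ext, rule ext, subst conv_sum_gen[where T="{_}"]) (auto simp: delta_def FI_zero split: if_splits)


lemma conv_assoc:
  assumes f: "f \<in> FI" and g: "g \<in> FI" and h: "h \<in> FI"
  shows "conv (conv f g) h = conv f (conv g h)"
proof (intro ext)
  fix x y
  define T where "T = pts f x y \<union> pts h x y"
  have fT: "finite T" using finite_pts f h T_def by auto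
  have inner1: "conv f g x z = (\<Sum>w\<in>T. if x \<le> w \<and> w \<le> z then f x w * g w z else 0)" if "z \<le> y" for z
  proof (rule conv_sum_gen[OF fT])
    fix w assume w: "x \<le> w" "w \<le> z" "f x w * g w z \<noteq> 0"
    show "w \<in> T"
    proof (cases "w = x")
      case True thus ?thesis unfolding T_def pts_def by auto
    next
      case False
      hence "(x, w) \<in> supp f x y" using w that unfolding supp_def by (auto intro: order_trans)
      thus ?thesis unfolding T_def pts_def by force
    qed
  qed
  have inner2: "conv g h w y = (\<Sum>z\<in>T. if w \<le> z \<and> z \<le> y then g w z * h z y else 0)" if "x \<le> w" for w
  proof (rule conv_sum_gen[OF fT])
    fix z assume z: "w \<le> z" "z \<le> y" "g w z * h z y \<noteq> 0"
    show "z \<in> T"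
    proof (cases "z = y")
      case True thus ?thesis unfolding T_def pts_def by auto
    next
      case False
      hence "(z, y) \<in> supp h x y" using z that unfolding supp_def by (auto intro: order_trans)
      thus ?thesis unfolding T_def pts_def by force
    qed
  qed
  have outer1: "conv (conv f g) h x y = (\<Sum>z\<in>T. if x \<le> z \<and> z \<le> y then conv f g x z * h z y else 0)"
    by (rule conv_T2[OF h fT]) (auto simp: T_def)
  have outer2: "conv f (conv g h) x y = (\<Sum>w\<in>T. if x \<le> w \<and> w \<le> y then f x w * conv g h w y else 0)"
    by (rule conv_T1[OF f fT]) (auto simp: T_def)
  have "conv (conv f g) h x y = (\<Sum>z\<in>T. \<Sum>w\<in>T. if x \<le> z \<and> z \<le> y \<and> x \<le> w \<and> w \<le> z then f x w * g w z * h z y else 0)"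
    unfolding outer1
  proof (rule sum.cong[OF refl])
    fix z assume "z \<in> T"
    show "(if x \<le> z \<and> z \<le> y then conv f g x z * h z y else 0) =
      (\<Sum>w\<in>T. if x \<le> z \<and> z \<le> y \<and> x \<le> w \<and> w \<le> z then f x w * g w z * h z y else 0)"
    proof (cases "x \<le> z \<and> z \<le> y")
      case True
      thus ?thesis using inner1[of z] by (auto simp: sum_distrib_right intro!: sum.cong)
    next
      case False thus ?thesis by (auto intro!: sum.neutral)
    qed
  qed
  also have "\<dots> = (\<Sum>w\<in>T. \<Sum>z\<in>T. if x \<le> z \<and> z \<le> y \<and> x \<le> w \<and> w \<le> z then f x w * g w z * h z y else 0)"
    by (rule sum.swap)
  also have "\<dots> = (\<Sum>w\<in>T. \<Sum>z\<in>T. if x \<le> w \<and> w \<le> y \<and> w \<le> z \<and> z \<le> y then f x w * g w z * h z y else 0)"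
    by (intro sum.cong refl) (auto intro: order_trans)
  also have "\<dots> = conv f (conv g h) x y"
    unfolding outer2
  proof (rule sum.cong[OF refl])
    fix w assume "w \<in> T"
    show "(\<Sum>z\<in>T. if x \<le> w \<and> w \<le> y \<and> w \<le> z \<and> z \<le> y then f x w * g w z * h z y else 0) =
       (if x \<le> w \<and> w \<le> y then f x w * conv g h w y else 0)"
    proof (cases "x \<le> w \<and> w \<le> y")
      case True
      thus ?thesis using inner2[of w] by (auto simp: sum_distrib_left mult.assoc intro!: sum.cong)
    next
      case False thus ?thesis by (auto intro!: sum.neutral)
    qed
  qed
  finally show "conv (conv f g) h x y = conv f (conv g h) x y" .
qed

lemma conv_diff_right:
  assumes f: "f \<in> FI"
  shows "conv f (g - h) = conv f g - conv f h"
proof (intro ext)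
  fix x y
  have fT: "finite (pts f x y)" using finite_pts f by auto
  show "conv f (g - h) x y = (conv f g - conv f h) x y"
    using conv_T1[OF f fT order_refl, of "g - h"] conv_T1[OF f fT order_refl, of g] conv_T1[OF f fT order_refl, of h]
    by (simp add: sum_subtractf[symmetric] right_diff_distrib if_distrib cong: if_cong)
qed

lemma conv_diff_left:
  assumes h: "h \<in> FI"
  shows "conv (f - g) h = conv f h - conv g h"
proof (intro ext)
  fix x y
  have fT: "finite (pts h x y)" using finite_pts h by auto
  show "conv (f - g) h x y = (conv f h - conv g h) x y"
    using conv_T2[OF h fT order_refl, of "f - g"] conv_T2[OF h fT order_refl, of f] conv_T2[OF h fT order_refl, of g]
    by (simp add: sum_subtractf[symmetric] left_diff_distrib if_distrib cong: if_cong)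
qed

lemma conv_row: "(\<And>w. f x w = f' x w) \<Longrightarrow> conv f g x y = conv f' g x y"
  unfolding conv_def by simp


primrec pw :: "('a::order \<Rightarrow> 'a \<Rightarrow> 'k::field) \<Rightarrow> nat \<Rightarrow> 'a \<Rightarrow> 'a \<Rightarrow> 'k" where
  "pw n 0 = delta"
| "pw n (Suc k) = conv (pw n k) n"

lemma pw_FI: "n \<in> FI \<Longrightarrow> pw n k \<in> FI"
  by (induction k) (auto intro: conv_FI delta_FI)

lemma pw_chain:
  assumes n: "n \<in> FI" and z: "\<And>x. n x x = 0"
  shows "pw n k x y \<noteq> 0 \<Longrightarrow> \<exists>S \<subseteq> supp n x y. card S = k"
proof (induction k arbitrary: y)
  case 0 thus ?case by auto
next
  case (Suc k)
  have "conv (pw n k) n x y \<noteq> 0" using Suc.prems by simp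
  then obtain m where m: "x \<le> m" "m \<le> y" "pw n k x m \<noteq> 0" "n m y \<noteq> 0"
    using conv_nonzero by blast
  have "m \<noteq> y" using m(4) z by auto
  hence my: "m < y" using m(2) by auto
  obtain S where S: "S \<subseteq> supp n x m" "card S = k" using Suc.IH[OF m(3)] by blast
  have finS: "finite S" using S(1) finite_supp[OF n] finite_subset by blast
  have notin: "(m, y) \<notin> S"
  proof
    assume "(m, y) \<in> S"
    hence "y \<le> m" using S(1) unfolding supp_def by auto
    thus False using my by auto
  qed
  have "insert (m, y) S \<subseteq> supp n x y"
    using S(1) supp_mono[of x x m y n] m my unfolding supp_def by auto
  moreover have "card (insert (m, y) S) = Suc k" using finS notin S(2) by simp
  ultimately show ?case by blast
qed

lemma pw_vanish:
  assumes n: "n \<in> FI" and z: "\<And>x. n x x = 0" and k: "card (supp n x y) < k"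
  shows "pw n k x y = 0"
proof (rule ccontr)
  assume "pw n k x y \<noteq> 0"
  then obtain S where "S \<subseteq> supp n x y" "card S = k" using pw_chain[OF n z] by blast
  hence "k \<le> card (supp n x y)" using card_mono[OF finite_supp[OF n]] by blast
  thus False using k by simp
qed

definition NN :: "('a::order \<Rightarrow> 'a \<Rightarrow> 'k::field) \<Rightarrow> 'a \<Rightarrow> 'a \<Rightarrow> nat" where
  "NN n x y = Suc (card (supp n x y))"

definition winv :: "('a::order \<Rightarrow> 'a \<Rightarrow> 'k::field) \<Rightarrow> 'a \<Rightarrow> 'a \<Rightarrow> 'k" where
  "winv n x y = (\<Sum>k<NN n x y. pw n k x y)"

lemma winv_eq:
  assumes n: "n \<in> FI" and z: "\<And>x. n x x = 0" and M: "NN n a b \<le> M"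
  shows "winv n a b = (\<Sum>k<M. pw n k a b)"
proof -
  have "(\<Sum>k<M. pw n k a b) = (\<Sum>k<NN n a b. pw n k a b)"
    by (rule sum.mono_neutral_right) (use M pw_vanish[OF n z] in \<open>auto simp: NN_def\<close>)
  thus ?thesis unfolding winv_def by simp
qed

lemma NN_mono: assumes n: "n \<in> FI" "x \<le> a" "b \<le> y" shows "NN n a b \<le> NN n x y"
  unfolding NN_def using card_mono[OF finite_supp[OF n(1)] supp_mono[OF n(2,3)]] by simp

lemma winv_FI:
  assumes n: "n \<in> FI" and z: "\<And>x. n x x = 0"
  shows "winv n \<in> FI"
proof (rule FI_intro)
  fix x y :: 'a
  show "\<not> x \<le> y \<Longrightarrow> winv n x y = 0"
    unfolding winv_def using FI_zero[OF pw_FI[OF n]] by simp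
  have "supp (winv n) x y \<subseteq> (\<Union>k<NN n x y. supp (pw n k) x y)"
  proof
    fix p assume p: "p \<in> supp (winv n) x y"
    obtain a b where ab: "p = (a, b)" by (cases p)
    have h: "x \<le> a" "a < b" "b \<le> y" "winv n a b \<noteq> 0" using p ab unfolding supp_def by auto
    have "winv n a b = (\<Sum>k<NN n x y. pw n k a b)"
      by (rule winv_eq[OF n z NN_mono[OF n h(1) h(3)]])
    then obtain k where k: "k < NN n x y" "pw n k a b \<noteq> 0" using h(4)
      by (metis (no_types, lifting) lessThan_iff sum.neutral)
    hence "p \<in> supp (pw n k) x y" using h ab unfolding supp_def by auto
    thus "p \<in> (\<Union>k<NN n x y. supp (pw n k) x y)" using k by blast
  qed
  moreover have "finite (\<Union>k<NN n x y. supp (pw n k) x y)"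
    using finite_supp[OF pw_FI[OF n]] by blast
  ultimately show "finite (supp (winv n) x y)" by (rule finite_subset)
qed

lemma pw_comm:
  assumes n: "n \<in> FI"
  shows "conv n (pw n k) = pw n (Suc k)"
proof (induction k)
  case 0 thus ?case using conv_delta_left[OF n] conv_delta_right[OF n] by simp
next
  case (Suc k)
  have "conv n (pw n (Suc k)) = conv (conv n (pw n k)) n"
    using conv_assoc[OF n pw_FI[OF n] n] by simp
  thus ?case using Suc.IH by simp
qed

lemma winv_right:
  assumes n: "n \<in> FI" and z: "\<And>x. n x x = 0"
  shows "conv (winv n) (delta - n) = delta"
proof -
  have w: "winv n \<in> FI" by (rule winv_FI[OF n z])
  have "conv (winv n) (delta - n) = winv n - conv (winv n) n"
    using conv_diff_right[OF w] conv_delta_right[OF w] by simp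
  also have "\<dots> = delta"
  proof (intro ext)
    fix x y
    show "(winv n - conv (winv n) n) x y = delta x y"
    proof (cases "x \<le> y")
      case False
      thus ?thesis using FI_zero[OF w False] FI_zero[OF delta_FI False] unfolding conv_def by simp
    next
      case True
      define M where "M = NN n x y"
      have fT: "finite (pts n x y)" using finite_pts[OF n] .
      have "conv (winv n) n x y = (\<Sum>m\<in>pts n x y. if x \<le> m \<and> m \<le> y then winv n x m * n m y else 0)"
        by (rule conv_T2[OF n fT order_refl])
      also have "\<dots> = (\<Sum>m\<in>pts n x y. \<Sum>k<M. if x \<le> m \<and> m \<le> y then pw n k x m * n m y else 0)"
      proof (rule sum.cong[OF refl])
        fix m assume "m \<in> pts n x y"
        show "(if x \<le> m \<and> m \<le> y then winv n x m * n m y else 0) = (\<Sum>k<M. if x \<le> m \<and> m \<le> y then pw n k x m * n m y else 0)"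
        proof (cases "x \<le> m \<and> m \<le> y")
          case True
          hence "winv n x m = (\<Sum>k<M. pw n k x m)"
            unfolding M_def by (intro winv_eq[OF n z] NN_mono[OF n]) auto
          thus ?thesis using True by (simp add: sum_distrib_right)
        next
          case False thus ?thesis by (auto intro!: sum.neutral)
        qed
      qed
      also have "\<dots> = (\<Sum>k<M. \<Sum>m\<in>pts n x y. if x \<le> m \<and> m \<le> y then pw n k x m * n m y else 0)"
        by (rule sum.swap)
      also have "\<dots> = (\<Sum>k<M. pw n (Suc k) x y)"
        using conv_T2[OF n fT order_refl] by simp
      finally have c: "conv (winv n) n x y = (\<Sum>k<M. pw n (Suc k) x y)" .
      have "winv n x y = (\<Sum>k<M. pw n k x y)" unfolding winv_def M_def ..
      hence "(winv n - conv (winv n) n) x y = (\<Sum>k<M. pw n k x y - pw n (Suc k) x y)"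
        using c by (simp add: sum_subtractf)
      also have "\<dots> = pw n 0 x y - pw n M x y" by (rule sum_lessThan_telescope')
      also have "pw n M x y = 0" by (rule pw_vanish[OF n z]) (simp add: M_def NN_def)
      finally show ?thesis by simp
    qed
  qed
  finally show ?thesis .
qed

lemma winv_left:
  assumes n: "n \<in> FI" and z: "\<And>x. n x x = 0"
  shows "conv (delta - n) (winv n) = delta"
proof -
  have w: "winv n \<in> FI" by (rule winv_FI[OF n z])
  have "conv (delta - n) (winv n) = winv n - conv n (winv n)"
    using conv_diff_left[OF w] conv_delta_left[OF w] by simp
  also have "\<dots> = delta"
  proof (intro ext)
    fix x y
    show "(winv n - conv n (winv n)) x y = delta x y"
    proof (cases "x \<le> y")
      case False
      thus ?thesis using FI_zero[OF w False] FI_zero[OF delta_FI False] unfolding conv_def by simp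
    next
      case True
      define M where "M = NN n x y"
      have fT: "finite (pts n x y)" using finite_pts[OF n] .
      have "conv n (winv n) x y = (\<Sum>m\<in>pts n x y. if x \<le> m \<and> m \<le> y then n x m * winv n m y else 0)"
        by (rule conv_T1[OF n fT order_refl])
      also have "\<dots> = (\<Sum>m\<in>pts n x y. \<Sum>k<M. if x \<le> m \<and> m \<le> y then n x m * pw n k m y else 0)"
      proof (rule sum.cong[OF refl])
        fix m assume "m \<in> pts n x y"
        show "(if x \<le> m \<and> m \<le> y then n x m * winv n m y else 0) = (\<Sum>k<M. if x \<le> m \<and> m \<le> y then n x m * pw n k m y else 0)"
        proof (cases "x \<le> m \<and> m \<le> y")
          case True
          hence "winv n m y = (\<Sum>k<M. pw n k m y)"
            unfolding M_def by (intro winv_eq[OF n z] NN_mono[OF n]) auto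
          thus ?thesis using True by (simp add: sum_distrib_left)
        next
          case False thus ?thesis by (auto intro!: sum.neutral)
        qed
      qed
      also have "\<dots> = (\<Sum>k<M. \<Sum>m\<in>pts n x y. if x \<le> m \<and> m \<le> y then n x m * pw n k m y else 0)"
        by (rule sum.swap)
      also have "\<dots> = (\<Sum>k<M. conv n (pw n k) x y)"
        using conv_T1[OF n fT order_refl] by simp
      also have "\<dots> = (\<Sum>k<M. pw n (Suc k) x y)"
        using pw_comm[OF n] by simp
      finally have c: "conv n (winv n) x y = (\<Sum>k<M. pw n (Suc k) x y)" .
      have "winv n x y = (\<Sum>k<M. pw n k x y)" unfolding winv_def M_def ..
      hence "(winv n - conv n (winv n)) x y = (\<Sum>k<M. pw n k x y - pw n (Suc k) x y)"
        using c by (simp add: sum_subtractf)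
      also have "\<dots> = pw n 0 x y - pw n M x y" by (rule sum_lessThan_telescope')
      also have "pw n M x y = 0" by (rule pw_vanish[OF n z]) (simp add: M_def NN_def)
      finally show ?thesis by simp
    qed
  qed
  finally show ?thesis .
qed

lemma inverse_exists:
  assumes u: "u \<in> FI" and d: "\<And>x. u x x = 1"
  shows "\<exists>w\<in>FI. conv u w = delta \<and> conv w u = delta"
proof -
  define n where "n = delta - u"
  have n: "n \<in> FI" unfolding n_def by (rule diff_FI[OF delta_FI u])
  have z: "\<And>x. n x x = 0" unfolding n_def using d by (simp add: delta_def)
  have un: "u = delta - n" unfolding n_def by (intro ext) simp
  show ?thesis using winv_FI[OF n z] winv_left[OF n z] winv_right[OF n z] un by auto
qed


theorem theorem3:
  fixes \<alpha> :: "'a::order \<Rightarrow> 'a \<Rightarrow> 'k::field"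
  assumes "\<alpha> \<in> FI" and "conv \<alpha> \<alpha> = \<alpha>"
  shows "conv (diag_part \<alpha>) (diag_part \<alpha>) = diag_part \<alpha> \<and>
         (\<exists>\<beta> \<gamma>. \<beta> \<in> FI \<and> \<gamma> \<in> FI \<and> conv \<beta> \<gamma> = delta \<and> conv \<gamma> \<beta> = delta \<and>
               \<alpha> = conv (conv \<gamma> (diag_part \<alpha>)) \<beta>)"
proof -
  have a: "\<alpha> \<in> FI" by (rule assms(1))
  have e01: "\<alpha> x x = 0 \<or> \<alpha> x x = 1" for x
  proof -
    have "conv \<alpha> \<alpha> x x = (\<Sum>w\<in>{x}. if x \<le> w \<and> w \<le> x then \<alpha> x w * \<alpha> w x else 0)"
      by (rule conv_sum_gen) (auto intro: order_antisym)
    hence "\<alpha> x x * \<alpha> x x = \<alpha> x x" using assms(2) by simp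
    thus ?thesis by (metis mult_cancel_right1 mult_zero_right)
  qed
  define \<epsilon> where "\<epsilon> = diag_part \<alpha>"
  have eps_FI: "\<epsilon> \<in> FI" unfolding \<epsilon>_def by (rule diag_FI)
  have part1: "conv \<epsilon> \<epsilon> = \<epsilon>"
  proof (intro ext)
    fix x y
    show "conv \<epsilon> \<epsilon> x y = \<epsilon> x y"
      unfolding \<epsilon>_def conv_diag_left using e01[of x] by (auto simp: diag_part_def)
  qed
  define u where "u = (\<lambda>x y. \<alpha> x x * \<alpha> x y + (1 - \<alpha> x x) * (delta x y - \<alpha> x y))"
  have u_FI: "u \<in> FI"
  proof (rule FI_intro)
    fix x y :: 'a
    show "\<not> x \<le> y \<Longrightarrow> u x y = 0"
      unfolding u_def using FI_zero[OF a, of x y] by (auto simp: delta_def)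
    have "supp u x y \<subseteq> supp \<alpha> x y"
      unfolding supp_def u_def delta_def by auto
    thus "finite (supp u x y)" using finite_supp[OF a] finite_subset by blast
  qed
  have u_diag: "u x x = 1" for x
    using e01[of x] unfolding u_def delta_def by auto
  obtain w where w: "w \<in> FI" "conv u w = delta" "conv w u = delta"
    using inverse_exists[OF u_FI u_diag] by blast
  have eu: "conv \<epsilon> u = conv \<epsilon> \<alpha>"
  proof (intro ext)
    fix x y
    show "conv \<epsilon> u x y = conv \<epsilon> \<alpha> x y"
      unfolding \<epsilon>_def conv_diag_left using e01[of x] by (auto simp: u_def)
  qed
  have ua: "conv u \<alpha> = conv \<epsilon> \<alpha>"
  proof (intro ext)
    fix x y
    show "conv u \<alpha> x y = conv \<epsilon> \<alpha> x y"
    proof (cases "\<alpha> x x = 1")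
      case True
      hence "conv u \<alpha> x y = conv \<alpha> \<alpha> x y" by (intro conv_row) (simp add: u_def)
      thus ?thesis using True assms(2) FI_zero[OF a, of x y] unfolding \<epsilon>_def conv_diag_left by auto
    next
      case False
      hence 0: "\<alpha> x x = 0" using e01[of x] by auto
      hence "conv u \<alpha> x y = conv (delta - \<alpha>) \<alpha> x y" by (intro conv_row) (simp add: u_def)
      also have "\<dots> = 0" using conv_diff_left[OF a, of delta \<alpha>] conv_delta_left[OF a] assms(2) by simp
      finally show ?thesis using 0 unfolding \<epsilon>_def conv_diag_left by simp
    qed
  qed
  have "conv (conv w \<epsilon>) u = conv w (conv \<epsilon> u)" by (rule conv_assoc[OF w(1) eps_FI u_FI])
  also have "\<dots> = conv w (conv u \<alpha>)" using eu ua by simp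
  also have "\<dots> = conv (conv w u) \<alpha>" by (rule conv_assoc[OF w(1) u_FI a, symmetric])
  also have "\<dots> = \<alpha>" using w(3) conv_delta_left[OF a] by simp
  finally have "\<alpha> = conv (conv w \<epsilon>) u" by simp
  thus ?thesis using part1 u_FI w unfolding \<epsilon>_def by blast
qed

end
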